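(* Let $q=2^m$ with $m\ge 4$ even. Then the incidence structure $(U_{q+1},\mathcal B_{q-4}(\mathrm{Tr}_{q^2/q}(\mathcal C_{\{3,5\}})))$ is a $3$-$(q+1,q-4,\lambda)$ design with $\lambda=\frac{(q-4)(q-5)(q-6)}{60}$, and its complementary incidence structure (whose blocks are the complements in $U_{q+1}$ of the blocks) is a $3$-$(q+1,5,1)$ design.
   Context: $U_{q+1}$ is the set of $(q+1)$-th roots of unity in $\mathrm{GF}(q^2)$; coordinates are indexed by $U_{q+1}$. $\mathcal C_{\{3,5\}}=\{(a_3u^3+a_{q-2}u^{q-2}+a_5u^5+a_{q-4}u^{q-4})_{u\in U_{q+1}}: a_i\in\mathrm{GF}(q^2)\}$; $\mathrm{Tr}_{q^2/q}(\mathcal C)$ is obtained by applying $x\mapsto x+x^q$ coordinatewise. $\mathcal B_w(\mathcal C)$ is the set of supports of codewords of Hamming weight $w$. A $t$-$(v,k,\lambda)$ design is a set of $v$ points with a set of $k$-subsets (blocks) such that every $t$ points lie in exactly $\lambda>0$ blocks. *)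

theory Defs
  imports Main
begin

text \<open>GF(q^2) is modelled by a finite field type 'a with CARD('a) = q^2.\<close>

definition roots_unity :: "nat \<Rightarrow> 'a::field set" where
  "roots_unity q = {u. u ^ (q + 1) = 1}"

definition trace_q2q :: "nat \<Rightarrow> 'a::field \<Rightarrow> 'a" where
  "trace_q2q q x = x + x ^ q"

text \<open>Codewords of C_{3,5} as functions on the field (only values on U_{q+1} matter);
  u^(q-2), u^(q-4) are genuine nonnegative powers since q >= 16.\<close>
definition code_C35 :: "nat \<Rightarrow> ('a::field \<Rightarrow> 'a) set" where
  "code_C35 q = {(\<lambda>u. a3 * u ^ 3 + b * u ^ (q - 2) + a5 * u ^ 5 + c * u ^ (q - 4))
                  | a3 b a5 c. True}"

definition trace_code :: "nat \<Rightarrow> ('a::field \<Rightarrow> 'a) set \<Rightarrow> ('a \<Rightarrow> 'a) set" where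
  "trace_code q C = {(\<lambda>u. trace_q2q q (f u)) | f. f \<in> C}"

definition supp_on :: "'a set \<Rightarrow> ('a \<Rightarrow> 'b::zero) \<Rightarrow> 'a set" where
  "supp_on P f = {u \<in> P. f u \<noteq> 0}"

definition blocks_of_weight :: "'a set \<Rightarrow> ('a \<Rightarrow> 'b::zero) set \<Rightarrow> nat \<Rightarrow> 'a set set" where
  "blocks_of_weight P C w = {supp_on P f | f. f \<in> C \<and> card (supp_on P f) = w}"

definition is_t_design :: "nat \<Rightarrow> nat \<Rightarrow> nat \<Rightarrow> nat \<Rightarrow> 'a set \<Rightarrow> 'a set set \<Rightarrow> bool" where
  "is_t_design t v k lam P Bs \<longleftrightarrow>
     finite P \<and> card P = v \<and> (\<forall>B\<in>Bs. B \<subseteq> P \<and> card B = k) \<and> lam > 0 \<and>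
     (\<forall>T. T \<subseteq> P \<and> card T = t \<longrightarrow> card {B \<in> Bs. T \<subseteq> B} = lam)"

definition complement_blocks :: "'a set \<Rightarrow> 'a set set \<Rightarrow> 'a set set" where
  "complement_blocks P Bs = (\<lambda>B. P - B) ` Bs"

end

theory Submission
  imports Defs "HOL-Computational_Algebra.Polynomial"
begin

lemma fin_field_pow_card:
  fixes x :: "'a::{field,finite}"
  shows "x ^ card (UNIV::'a set) = x"
proof (cases "x = 0")
  case True
  have "card (UNIV::'a set) > 0" by (simp add: finite_UNIV_card_ge_0)
  thus ?thesis using True by simp
next
  case False
  let ?S = "UNIV - {0::'a}"
  have bij: "bij_betw (\<lambda>y. x*y) ?S ?S"
    by (rule bij_betw_byWitness[where f'="\<lambda>y. y/x"]) (auto simp: False)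
  have "prod (\<lambda>y. x*y) ?S = prod (\<lambda>y. y) ?S"
    using prod.reindex_bij_betw[OF bij, of "\<lambda>y. y"] by simp
  moreover have "prod (\<lambda>y. x*y) ?S = x^card ?S * prod (\<lambda>y. y) ?S"
    by (simp add: prod.distrib)
  moreover have "prod (\<lambda>y. y) ?S \<noteq> 0" by simp
  ultimately have 1: "x^card ?S = 1" by simp
  have "card ?S = card (UNIV::'a set) - 1" by (simp add: card_Diff_singleton)
  moreover have "card (UNIV::'a set) \<ge> 1" by (simp add: Suc_leI finite_UNIV_card_ge_0)
  ultimately have "card (UNIV::'a set) = Suc (card ?S)" by simp
  thus ?thesis using 1 by (metis power_Suc mult.right_neutral)
qed

lemma fin_field_card_zero: "of_nat (card (UNIV::'a::{field,finite} set)) = (0::'a)"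
proof -
  have bij: "bij_betw (\<lambda>y. y + 1) UNIV (UNIV::'a set)"
    by (rule bij_betw_byWitness[where f'="\<lambda>y. y - 1"]) auto
  have "sum (\<lambda>y. y + 1) UNIV = sum (\<lambda>y::'a. y) UNIV"
    using sum.reindex_bij_betw[OF bij, of "\<lambda>y. y"] by simp
  moreover have "sum (\<lambda>y. y + 1) UNIV = sum (\<lambda>y::'a. y) UNIV + of_nat (card (UNIV::'a set))"
    by (simp add: sum.distrib)
  ultimately show ?thesis by simp
qed

lemma card_pow_roots:
  fixes c :: "'a::field"
  assumes "n \<ge> 1"
  shows "card {x. x^n = c} \<le> n"
proof -
  let ?p = "monom 1 n + [:-c:]"
  have ev: "poly ?p x = x^n - c" for x by (simp add: poly_monom)
  have deg: "degree ?p = n" using assms by (subst degree_add_eq_left) (auto simp: degree_monom_eq)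
  have "?p \<noteq> 0" using deg assms by auto
  from card_poly_roots_bound[OF this] deg ev show ?thesis by simp
qed

lemma quartic_zero:
  fixes c0 c1 c2 c3 c4 :: "'a::field"
  assumes "\<forall>p\<in>P. c4*p^4+c3*p^3+c2*p^2+c1*p+c0 = 0" and "card P \<ge> 5"
  shows "c0 = 0 \<and> c1 = 0 \<and> c2 = 0 \<and> c3 = 0 \<and> c4 = 0"
proof -
  let ?p = "Poly [c0,c1,c2,c3,c4]"
  have ev: "poly ?p x = c4*x^4+c3*x^3+c2*x^2+c1*x+c0" for x
    by (simp add: algebra_simps power2_eq_square power3_eq_cube power4_eq_xxxx)
  have fin: "finite P" using assms(2) by (metis card.infinite not_numeral_le_zero)
  have "?p = 0"
  proof (rule ccontr)
    assume nz: "?p \<noteq> 0"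
    have "degree ?p \<le> 4" using degree_Poly[of "[c0,c1,c2,c3,c4]"] by simp
    moreover have "P \<subseteq> {x. poly ?p x = 0}"
    proof
      fix x assume "x \<in> P"
      hence "c4*x^4+c3*x^3+c2*x^2+c1*x+c0 = 0" using assms(1) by blast
      thus "x \<in> {x. poly ?p x = 0}" by (simp only: ev mem_Collect_eq)
    qed
    hence "card P \<le> card {x. poly ?p x = 0}"
      by (rule card_mono[OF poly_roots_finite[OF nz]])
    moreover note card_poly_roots_bound[OF nz]
    ultimately show False using assms(2) by linarith
  qed
  hence "coeff ?p i = 0" for i by simp
  from this[of 0] this[of "Suc 0"] this[of "Suc (Suc 0)"] this[of "Suc (Suc (Suc 0))"] this[of "Suc (Suc (Suc (Suc 0)))"] show ?thesis
    by (simp add: nth_default_def)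
qed

locale c2f =
  fixes TY :: "'a::{field,finite} itself" and q :: nat and n :: nat
  assumes two: "(2::'a) = 0"
    and qn: "q = 2^n"
    and frob2: "\<And>x::'a. x^(q*q) = x"
    and q3: "q mod 3 = 1"
    and q16: "16 \<le> q"
    and cardF: "card (UNIV::'a set) = q*q"
begin

abbreviation UU :: "'a set" where "UU \<equiv> roots_unity q"

lemma add_self[simp]: "(x::'a) + x = 0"
  using two by (metis mult_2 mult_zero_left)

lemma neg_self[simp]: "-(x::'a) = x"
  using add_self by (metis add_eq_0_iff)

lemma diff_add: "(x::'a) - y = x + y"
  by (metis diff_conv_add_uminus neg_self)

lemma n0: "numeral (Num.Bit0 k) = (0::'a)"
  by (metis mult_2 numeral_Bit0 two mult_zero_left)

lemma n1: "numeral (Num.Bit1 k) = (1::'a)"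
  by (metis add_0 numeral_Bit1 numeral_Bit0 mult_2 two mult_zero_left)

lemma eq_iff_add0: "((x::'a) = y) \<longleftrightarrow> x + y = 0"
  by (metis add_self diff_add eq_iff_diff_eq_0)

lemma sq_add: "((x::'a)+y)^2 = x^2 + y^2"
  by (simp add: power2_eq_square algebra_simps n0)

lemma pow2_add: "((x::'a)+y)^(2^k) = x^(2^k) + y^(2^k)"
proof (induction k)
  case 0 then show ?case by simp
next
  case (Suc k)
  have "(x+y)^(2^Suc k) = ((x+y)^(2^k))^2" by (simp add: power_mult[symmetric] mult.commute)
  also have "\<dots> = (x^(2^k))^2 + (y^(2^k))^2" using Suc sq_add by simp
  also have "\<dots> = x^(2^Suc k) + y^(2^Suc k)" by (simp add: power_mult[symmetric] mult.commute)
  finally show ?case .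
qed

lemma fq_add: "((x::'a)+y)^q = x^q + y^q"
  using pow2_add qn by simp

lemma fq_fq: "((x::'a)^q)^q = x"
  by (metis frob2 power_mult)

lemma q_ge: "q \<ge> 16" using q16 .

lemma U_nz: "u \<in> UU \<Longrightarrow> u \<noteq> 0"
  by (auto simp: roots_unity_def)

lemma U_q: assumes "u \<in> UU" shows "u^q = inverse u"
proof -
  have "u * u^q = 1" using assms by (simp add: roots_unity_def)
  from inverse_unique[OF this] show ?thesis by simp
qed

lemma U_mult: assumes "u \<in> UU" "v \<in> UU" shows "u*v \<in> UU"
proof -
  have "(u*v)^(q+1) = u^(q+1) * v^(q+1)" by (rule power_mult_distrib)
  thus ?thesis using assms by (simp add: roots_unity_def del: power_Suc)
qed

lemma U_inverse: assumes "u \<in> UU" shows "inverse u \<in> UU"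
proof -
  have "(inverse u)^(q+1) = inverse (u^(q+1))" by (rule power_inverse)
  thus ?thesis using assms by (simp add: roots_unity_def del: power_Suc)
qed

lemma U_divide: "u \<in> UU \<Longrightarrow> v \<in> UU \<Longrightarrow> u/v \<in> UU"
  by (simp add: U_inverse U_mult divide_inverse)

lemma U_cube_one: assumes "w \<in> UU" "w^3 = 1" shows "w = 1"
proof -
  have "\<exists>j. q + 1 = 3*j + 2" using q3 by presburger
  then obtain j where j: "q + 1 = 3*j + 2" by blast
  have e: "w^(q+1) = 1" using assms unfolding roots_unity_def by blast
  have "w^(3*j+2) = 1" using e by (simp only: j)
  moreover have "(w^3)^j * w^2 = w^(3*j+2)" by (simp only: power_add power_mult)
  ultimately have "(w^3)^j * w^2 = 1" by simp
  hence w2: "w^2 = 1" using assms by simp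
  have "w^3 = w^2 * w" by (simp add: power2_eq_square power3_eq_cube)
  thus ?thesis using w2 assms by simp
qed

lemma U_cube_inj: assumes "u \<in> UU" "v \<in> UU" "u^3 = v^3" shows "u = v"
proof -
  have "(u/v)^3 = 1" using assms U_nz[OF assms(2)] by (simp add: power_divide)
  hence "u/v = 1" using U_cube_one U_divide assms by blast
  thus ?thesis using U_nz[OF assms(2)] by simp
qed

lemma pow_full: "x \<noteq> 0 \<Longrightarrow> (x::'a)^(q*q-1) = 1"
proof -
  assume "x \<noteq> 0"
  have "q*q \<ge> 1" using q16 by simp
  hence e: "q*q = Suc (q*q-1)" by simp
  have "x^(q*q) = x * x^(q*q-1)" by (subst e) (rule power_Suc)
  with frob2[of x] \<open>x \<noteq> 0\<close> show ?thesis by simp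
qed

lemma pow_qm1_U: "x \<noteq> 0 \<Longrightarrow> (x::'a)^(q-1) \<in> UU"
proof -
  assume "x \<noteq> 0"
  have "(q-1)*(q+1) = q*q-1" using q16 by (simp add: algebra_simps)
  have "(x^(q-1))^(q+1) = x^((q-1)*(q+1))" by (simp only: power_mult)
  also have "\<dots> = x^(q*q-1)" by (simp only: \<open>(q-1)*(q+1) = q*q-1\<close>)
  finally have "(x^(q-1))^(q+1) = x^(q*q-1)" .
  thus ?thesis using pow_full[OF \<open>x \<noteq> 0\<close>] by (simp add: roots_unity_def)
qed

lemma U_card_surj: "card UU = q + 1 \<and> UU = (\<lambda>y. y^(q-1)) ` (UNIV - {0})"
proof -
  let ?f = "\<lambda>y::'a. y^(q-1)"
  let ?I = "?f ` (UNIV - {0})"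
  have sub: "?I \<subseteq> UU" using pow_qm1_U by auto
  have cU: "card UU \<le> q+1" unfolding roots_unity_def by (rule card_pow_roots) simp
  have "UNIV - {0} \<subseteq> (\<Union>w\<in>?I. {y. ?f y = w})" by auto
  hence "card (UNIV - {0::'a}) \<le> card (\<Union>w\<in>?I. {y. ?f y = w})" by (intro card_mono) auto
  also have "\<dots> \<le> (\<Sum>w\<in>?I. card {y. ?f y = w})" by (rule card_UN_le) simp
  also have "\<dots> \<le> (\<Sum>w\<in>?I. q - 1)" by (intro sum_mono card_pow_roots) (use q16 in simp)
  also have "\<dots> = card ?I * (q-1)" by simp
  finally have "q*q - 1 \<le> card ?I * (q-1)" using cardF by (simp add: card_Diff_singleton)
  moreover have "q*q - 1 = (q+1)*(q-1)" using q16 by (simp add: algebra_simps)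
  ultimately have "(q+1)*(q-1) \<le> card ?I * (q-1)" by (simp only:)
  hence cI: "q + 1 \<le> card ?I" using q16 by (simp only: mult_le_cancel2)
  have cIU: "card ?I \<le> card UU" by (rule card_mono[OF _ sub]) simp
  hence cUU: "card UU = q+1" using cI cU by simp
  have "?I = UU" by (rule card_subset_eq) (use sub cI cU cIU in auto)
  thus ?thesis using cUU by simp
qed

lemma card_U: "card UU = q + 1" by (rule conjunct1[OF U_card_surj])

lemma U_surj: assumes "w \<in> UU" shows "\<exists>y. y \<noteq> 0 \<and> y^(q-1) = w"
proof -
  have "w \<in> (\<lambda>y. y^(q-1)) ` (UNIV - {0})" using assms conjunct2[OF U_card_surj] by (simp only:)
  then obtain y where "y \<in> UNIV - {0}" "w = y^(q-1)" by (rule imageE)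
  thus ?thesis by blast
qed

lemma omega_ex: "\<exists>w::'a. w^2 + w + 1 = 0 \<and> w^q = w"
proof -
  have "\<exists>x::'a. x^3 = 1 \<and> x \<noteq> 1"
  proof (rule ccontr)
    assume H: "\<not> ?thesis"
    let ?S = "UNIV - {0::'a}"
    have inj: "inj_on (\<lambda>x. x^3) ?S"
    proof (rule inj_onI)
      fix x y assume xy: "x \<in> ?S" "y \<in> ?S" "x^3 = (y::'a)^3"
      hence "(x/y)^3 = 1" by (simp add: power_divide)
      hence "x/y = 1" using H by blast
      thus "x = y" using xy by simp
    qed
    have im: "(\<lambda>x. x^3) ` ?S \<subseteq> ?S" by auto
    have "(\<lambda>x. x^3) ` ?S = ?S"
      by (rule card_subset_eq) (use im card_image[OF inj] in auto)
    obtain M where M: "q*q - 1 = 3*M"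
    proof -
      have "(q*q) mod 3 = 1" using q3 by (simp add: mod_mult_eq[symmetric])
      hence "3 dvd q*q - 1" using q16 by (simp add: mod_eq_dvd_iff_nat[symmetric] )
      thus ?thesis using that by blast
    qed
    have "?S \<subseteq> {y. y^M = 1}"
    proof
      fix y assume y: "y \<in> ?S"
      have "y \<in> (\<lambda>x. x^3) ` ?S" using y \<open>(\<lambda>x. x^3) ` ?S = ?S\<close> by (simp only:)
      then obtain x where x: "x \<in> ?S" "y = x^3" by (rule imageE)
      have "y^M = x^(3*M)" by (simp add: x power_mult)
      also have "\<dots> = 1" using pow_full[of x] x M by simp
      finally show "y \<in> {y. y^M = 1}" by simp
    qed
    hence "card ?S \<le> card {y::'a. y^M = 1}" by (intro card_mono) auto
    also have "\<dots> \<le> M"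
    proof (rule card_pow_roots)
      have "q*q \<ge> 16*16" using q16 mult_le_mono by blast
      thus "1 \<le> M" using M by linarith
    qed
    finally have "q*q - 1 \<le> M" using cardF by (simp add: card_Diff_singleton)
    moreover have "q*q \<ge> 16*16" using q16 mult_le_mono by blast
    ultimately show False using M by linarith
  qed
  then obtain x :: 'a where x: "x^3 = 1" "x \<noteq> 1" by blast
  have "(x - 1) * (x^2 + x + 1) = x^3 - 1" by (simp add: algebra_simps power2_eq_square power3_eq_cube del: neg_self)
  hence "(x - 1) * (x^2 + x + 1) = 0" using x(1) by (simp del: neg_self)
  moreover have "x - 1 \<noteq> 0" using x(2) by simp
  ultimately have w: "x^2 + x + 1 = 0" by simp
  have "\<exists>j. q = 3*j + 1" using q3 by presburger
  then obtain j where j: "q = 3*j + 1" by blast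
  have "x^q = x" using x by (simp add: j power_mult)
  thus ?thesis using w by blast
qed

end

definition Hf :: "nat \<Rightarrow> 'a::field \<Rightarrow> 'a \<Rightarrow> 'a \<Rightarrow> 'a" where
  "Hf q x y u = y*u^5 + x*u^4 + x^q*u + y^q"

definition Zs :: "nat \<Rightarrow> 'a::field \<Rightarrow> 'a \<Rightarrow> 'a set" where
  "Zs q x y = {u \<in> roots_unity q. Hf q x y u = 0}"

definition e2f :: "'a::comm_ring \<Rightarrow> 'a \<Rightarrow> 'a \<Rightarrow> 'a \<Rightarrow> 'a \<Rightarrow> 'a" where
  "e2f a b c d e = a*b+a*c+a*d+a*e+b*c+b*d+b*e+c*d+c*e+d*e"

definition e3f :: "'a::comm_ring \<Rightarrow> 'a \<Rightarrow> 'a \<Rightarrow> 'a \<Rightarrow> 'a \<Rightarrow> 'a" where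
  "e3f a b c d e = a*b*c+a*b*d+a*b*e+a*c*d+a*c*e+a*d*e+b*c*d+b*c*e+b*d*e+c*d*e"

lemma prod5_expand:
  fixes u a b c d e :: "'a::comm_ring_1"
  shows "(u+a)*(u+b)*(u+c)*(u+d)*(u+e) = u^5 + (a+b+c+d+e)*u^4 + e2f a b c d e * u^3
     + e3f a b c d e * u^2 + (a*b*c*d+a*b*c*e+a*b*d*e+a*c*d*e+b*c*d*e)*u + a*b*c*d*e"
  unfolding e2f_def e3f_def by (simp add: eval_nat_numeral algebra_simps)

lemma H_minus_prod:
  fixes u a b c d e x y X Y :: "'a::comm_ring_1"
  shows "y*u^5 + x*u^4 + X*u + Y - y*((u+a)*(u+b)*(u+c)*(u+d)*(u+e)) =
     (x - y*(a+b+c+d+e))*u^4 + (-(y*e2f a b c d e))*u^3 + (-(y*e3f a b c d e))*u^2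
     + (X - y*(a*b*c*d+a*b*c*e+a*b*d*e+a*c*d*e+b*c*d*e))*u + (Y - y*(a*b*c*d*e))"
  unfolding prod5_expand by (simp add: algebra_simps)

context c2f begin

lemma add0D: "(x::'a) + y = 0 \<Longrightarrow> x = y"
  using eq_iff_add0 by blast

lemma L1:
  fixes a b c d e x y :: 'a
  assumes dist: "distinct [a,b,c,d,e]"
    and mem: "{a,b,c,d,e} \<subseteq> Zs q x y" and cd: "card (Zs q x y) = 5"
  shows "e2f a b c d e = 0 \<and> e3f a b c d e = 0"
proof (cases "y = 0")
  case True
  show ?thesis
  proof (cases "x = 0")
    case True
    have "Zs q x y = UU" using \<open>y = 0\<close> True q16 by (auto simp: Zs_def Hf_def power_0_left)
    thus ?thesis using cd card_U q16 by simp
  next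
    case False
    have key: "u^3 = x^q / x" if "u \<in> Zs q x y" for u
    proof -
      have u: "u \<in> UU" "x*u^4 + x^q*u = 0" using that \<open>y = 0\<close> q16 by (auto simp: Zs_def Hf_def power_0_left)
      have "u \<noteq> 0" using U_nz u(1) by blast
      have e4: "u^4 = u^3 * u" by (simp add: eval_nat_numeral)
      have "(x*u^3 + x^q) * u = x*u^4 + x^q*u" by (simp add: e4 algebra_simps)
      hence "(x*u^3 + x^q) * u = 0" using u(2) by simp
      hence "x*u^3 + x^q = 0" using \<open>u \<noteq> 0\<close> by simp
      hence "x*u^3 = x^q" by (rule add0D)
      thus ?thesis using False by (simp add: field_simps)
    qed
    have "a^3 = b^3" using key mem by auto
    hence "a = b" using U_cube_inj mem by (auto simp: Zs_def)
    thus ?thesis using dist by simp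
  qed
next
  case False
  let ?c4 = "x - y*(a+b+c+d+e)" and ?c3 = "-(y*e2f a b c d e)" and ?c2 = "-(y*e3f a b c d e)"
    and ?c1 = "x^q - y*(a*b*c*d+a*b*c*e+a*b*d*e+a*c*d*e+b*c*d*e)" and ?c0 = "y^q - y*(a*b*c*d*e)"
  have "\<forall>p\<in>{a,b,c,d,e}. ?c4*p^4 + ?c3*p^3 + ?c2*p^2 + ?c1*p + ?c0 = 0"
  proof
    fix p assume p: "p \<in> {a,b,c,d,e}"
    have h: "Hf q x y p = 0" using p mem by (auto simp: Zs_def)
    have pr: "(p+a)*(p+b)*(p+c)*(p+d)*(p+e) = 0" using p by auto
    show "?c4*p^4 + ?c3*p^3 + ?c2*p^2 + ?c1*p + ?c0 = 0"
      using H_minus_prod[of y p x "x^q" "y^q" a b c d e] h pr unfolding Hf_def by simp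
  qed
  moreover have "card {a,b,c,d,e} \<ge> 5" using dist by simp
  ultimately have "?c3 = 0 \<and> ?c2 = 0" using quartic_zero by blast
  thus ?thesis using False by simp
qed

end

lemma cubic_expand:
  fixes u a b c :: "'a::comm_ring_1"
  shows "(u+a)*(u+b)*(u+c) = u^3 + (a+b+c)*u^2 + (a*b+b*c+c*a)*u + a*b*c"
  by (simp add: eval_nat_numeral algebra_simps)

context c2f begin

lemma char2_cube: "((x::'a)+s)^3 = x^3 + s*x^2 + s^2*x + s^3"
  by (simp add: power3_eq_cube power2_eq_square algebra_simps n0 n1)

lemma L2:
  fixes a b c :: 'a
  assumes U: "a \<in> UU" "b \<in> UU" "c \<in> UU" and dist: "a \<noteq> b" "a \<noteq> c" "b \<noteq> c"
  shows "a*b+b*c+c*a - (a+b+c)^2 \<noteq> 0"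
proof
  assume H: "a*b+b*c+c*a - (a+b+c)^2 = 0"
  define s where "s = a+b+c"
  define E2 where "E2 = a*b+b*c+c*a"
  define E3 where "E3 = a*b*c"
  have E2s: "E2 = s^2" using H unfolding E2_def s_def by simp
  have nz: "a \<noteq> 0" "b \<noteq> 0" "c \<noteq> 0" using U U_nz by auto
  have Uq: "a^q = inverse a" "b^q = inverse b" "c^q = inverse c" using U U_q by auto
  have "E2^q = (s^2)^q" using E2s by simp
  also have "(s^2)^q = (s^q)^2" by (metis power_mult mult.commute)
  finally have "E2^q = (s^q)^2" .
  moreover have "E2^q = inverse a * inverse b + inverse b * inverse c + inverse c * inverse a"
    unfolding E2_def by (simp add: fq_add power_mult_distrib Uq)
  moreover have "s^q = inverse a + inverse b + inverse c"
    unfolding s_def by (simp add: fq_add Uq)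
  ultimately have eq: "inverse a * inverse b + inverse b * inverse c + inverse c * inverse a
     = (inverse a + inverse b + inverse c)^2" by simp
  have l: "(inverse a * inverse b + inverse b * inverse c + inverse c * inverse a) * (a*b*c)^2 = E3 * s"
    unfolding E3_def s_def using nz by (simp add: field_simps power2_eq_square)
  have r: "(inverse a + inverse b + inverse c)^2 * (a*b*c)^2 = E2^2"
    unfolding E2_def using nz by (simp add: field_simps power2_eq_square)
  have "E3 * s = E2^2" using l r eq by simp
  hence "E3 * s = s^4" using E2s by simp
  hence prod0: "s * (E3 - s^3) = 0" by (simp add: algebra_simps eval_nat_numeral del: neg_self)
  have ra: "a^3 + s*a^2 + E2*a + E3 = 0"
    using cubic_expand[of a a b c] unfolding s_def E2_def E3_def by simp
  have rb: "b^3 + s*b^2 + E2*b + E3 = 0"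
    using cubic_expand[of b a b c] unfolding s_def E2_def E3_def by (simp add: algebra_simps)
  show False
  proof (cases "s = 0")
    case True
    hence "E2 = 0" using E2s by simp
    hence "a^3 = E3" "b^3 = E3" using ra rb True by (auto intro: add0D)
    hence "a = b" using U_cube_inj U by simp
    thus False using dist by simp
  next
    case False
    hence "E3 = s^3" using prod0 by simp
    hence "(a+s)^3 = 0" "(b+s)^3 = 0" using ra rb E2s char2_cube by simp_all
    hence "a = s" "b = s" using add0D by auto
    thus False using dist by simp
  qed
qed

lemma L3:
  fixes a b c d e d' e' :: 'a
  assumes U: "a \<in> UU" "b \<in> UU" "c \<in> UU" and dist: "a \<noteq> b" "a \<noteq> c" "b \<noteq> c"
    and de: "d' \<noteq> e'"
    and h: "e2f a b c d e = 0" "e3f a b c d e = 0" "e2f a b c d' e' = 0" "e3f a b c d' e' = 0"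
  shows "{d',e'} \<subseteq> {d,e}"
proof -
  define s where "s = a+b+c"
  define E2 where "E2 = a*b+b*c+c*a"
  define E3 where "E3 = a*b*c"
  have r2: "e2f a b c x y = E2 + s*(x+y) + x*y" for x y
    unfolding e2f_def E2_def s_def by (simp add: algebra_simps)
  have r3: "e3f a b c x y = E3 + E2*(x+y) + s*(x*y)" for x y
    unfolding e3f_def E3_def E2_def s_def by (simp add: algebra_simps)
  define \<sigma> where "\<sigma> = (d+e) - (d'+e')"
  define \<pi> where "\<pi> = d*e - d'*e'"
  have i1: "s*\<sigma> + \<pi> = 0"
  proof -
    have "s*\<sigma> + \<pi> = e2f a b c d e - e2f a b c d' e'"
      unfolding r2 \<sigma>_def \<pi>_def by (simp add: algebra_simps del: neg_self)
    thus ?thesis using h by simp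
  qed
  have i2: "E2*\<sigma> + s*\<pi> = 0"
  proof -
    have "E2*\<sigma> + s*\<pi> = e3f a b c d e - e3f a b c d' e'"
      unfolding r3 \<sigma>_def \<pi>_def by (simp add: algebra_simps del: neg_self)
    thus ?thesis using h by simp
  qed
  have "(E2 - s^2)*\<sigma> = (E2*\<sigma> + s*\<pi>) - s*(s*\<sigma> + \<pi>)"
    by (simp add: algebra_simps power2_eq_square del: neg_self)
  hence "(E2 - s^2)*\<sigma> = 0" using i1 i2 by simp
  moreover have "E2 - s^2 \<noteq> 0" using L2[OF U dist] unfolding E2_def s_def by simp
  ultimately have s0: "\<sigma> = 0" by simp
  hence p0: "\<pi> = 0" using i1 by simp
  have se: "d+e = d'+e'" using s0 unfolding \<sigma>_def by simp
  have pe: "d*e = d'*e'" using p0 unfolding \<pi>_def by simp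
  have root: "(x+d)*(x+e) = 0" if "x \<in> {d',e'}" for x
  proof -
    have "(x+d)*(x+e) = x^2 + (d+e)*x + d*e" by (simp add: algebra_simps power2_eq_square)
    also have "\<dots> = x^2 + (d'+e')*x + d'*e'" using se pe by simp
    also have "\<dots> = 0" using that by (auto simp: algebra_simps power2_eq_square n0)
    finally show ?thesis .
  qed
  show ?thesis
  proof
    fix x assume x: "x \<in> {d',e'}"
    from root[OF x] have "x + d = 0 \<or> x + e = 0" by simp
    thus "x \<in> {d,e}" using add0D by blast
  qed
qed

end

lemma D_N_ident:
  fixes t1 t2 A B C G E2 E3 s :: "'a::comm_ring_1"
  shows "E2*((t1*A+B)*(t2*A+B)) + s*((t1*C+G)*(t2*A+B) + (t2*C+G)*(t1*A+B)) + (t1*C+G)*(t2*C+G)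
     = E2*((t1*t2)*A^2 + (t1+t2)*A*B + B^2) + s*(2*(t1*t2)*A*C + (t1+t2)*(A*G+B*C) + 2*B*G)
       + (t1*t2)*C^2 + (t1+t2)*C*G + G^2"
    and "E3*((t1*A+B)*(t2*A+B)) + E2*((t1*C+G)*(t2*A+B) + (t2*C+G)*(t1*A+B)) + s*((t1*C+G)*(t2*C+G))
     = E3*((t1*t2)*A^2 + (t1+t2)*A*B + B^2) + E2*(2*(t1*t2)*A*C + (t1+t2)*(A*G+B*C) + 2*B*G)
       + s*((t1*t2)*C^2 + (t1+t2)*C*G + G^2)"
  by (simp_all add: algebra_simps power2_eq_square)

context c2f begin

lemma char2_id2:
  fixes a b c :: 'a
  shows "(a*b+b*c+c*a)*((a+b)^2 + (a+b)*(b+c) + (b+c)^2)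
     + (a+b+c)*((a+b)*(a*(b+c)) + (b+c)*(c*(a+b))) + (c*(a+b))^2 + c*(a+b)*(a*(b+c)) + (a*(b+c))^2 = 0"
  by (simp add: algebra_simps power2_eq_square n0 n1)

lemma char2_id3:
  fixes a b c :: 'a
  shows "(a*b*c)*((a+b)^2 + (a+b)*(b+c) + (b+c)^2)
     + (a*b+b*c+c*a)*((a+b)*(a*(b+c)) + (b+c)*(c*(a+b))) + (a+b+c)*((c*(a+b))^2 + c*(a+b)*(a*(b+c)) + (a*(b+c))^2) = 0"
  by (simp add: algebra_simps power2_eq_square n0 n1)


lemma Mt:
  fixes a b c t :: 'a
  assumes U: "a \<in> UU" "b \<in> UU" "c \<in> UU" and dist: "a \<noteq> b" "a \<noteq> c" "b \<noteq> c"
    and tq: "t^q = t" and tt: "t^2 + t \<noteq> 0"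
  shows "t*(a+b) + (b+c) \<noteq> 0 \<and> (t*c*(a+b) + a*(b+c)) / (t*(a+b) + (b+c)) \<in> UU
     \<and> (t*c*(a+b) + a*(b+c)) / (t*(a+b) + (b+c)) \<noteq> a
     \<and> (t*c*(a+b) + a*(b+c)) / (t*(a+b) + (b+c)) \<noteq> b
     \<and> (t*c*(a+b) + a*(b+c)) / (t*(a+b) + (b+c)) \<noteq> c"
proof -
  define D where "D = t*(a+b) + (b+c)"
  define N where "N = t*c*(a+b) + a*(b+c)"
  have nz: "a \<noteq> 0" "b \<noteq> 0" "c \<noteq> 0" using U U_nz by auto
  have Uq: "a^q = inverse a" "b^q = inverse b" "c^q = inverse c" using U U_q by auto
  have ab: "a + b \<noteq> 0" "b + c \<noteq> 0" "a - c \<noteq> 0" "c - a \<noteq> 0" using dist add0D by auto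
  have "t^2 + t = t*(t+1)" by (simp add: power2_eq_square algebra_simps)
  hence t0: "t \<noteq> 0" "t + 1 \<noteq> 0" using tt by auto
  have D0: "D \<noteq> 0"
  proof
    assume "D = 0"
    hence cc: "c = t*(a+b) + b" unfolding D_def by (metis add0D add.assoc)
    have "c^q = t*(inverse a + inverse b) + inverse b"
      unfolding cc by (simp add: fq_add power_mult_distrib Uq tq)
    moreover have "c * c^q = 1" using U(3) by (simp add: roots_unity_def)
    ultimately have "(t*(a+b) + b) * (t*(inverse a + inverse b) + inverse b) = 1" using cc by simp
    hence "(t*(a+b) + b) * (t*(inverse a + inverse b) + inverse b) * (a*b) = a*b" by simp
    moreover have "(t*(a+b) + b) * (t*(inverse a + inverse b) + inverse b) * (a*b)
        = (t*(a+b) + b) * (t*(a+b) + a)" using nz by (simp add: field_simps)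
    moreover have "(t*(a+b) + b) * (t*(a+b) + a) = (t^2+t)*(a+b)^2 + a*b"
      by (simp add: algebra_simps power2_eq_square del: neg_self)
    ultimately have "(t^2+t)*(a+b)^2 = 0" by simp
    thus False using tt ab by simp
  qed
  have Nq: "N^q * (a*b*c) = D"
  proof -
    have "N^q = t*inverse c*(inverse a + inverse b) + inverse a*(inverse b + inverse c)"
      unfolding N_def by (simp add: fq_add power_mult_distrib Uq tq)
    moreover have "(t*inverse c*(inverse a + inverse b) + inverse a*(inverse b + inverse c)) * (a*b*c) = D"
      unfolding D_def using nz by (simp add: field_simps)
    ultimately show ?thesis by simp
  qed
  have Dq: "D^q * (a*b*c) = N"
  proof -
    have "D^q = t*(inverse a + inverse b) + (inverse b + inverse c)"
      unfolding D_def by (simp add: fq_add power_mult_distrib Uq tq)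
    moreover have "(t*(inverse a + inverse b) + (inverse b + inverse c)) * (a*b*c) = N"
      unfolding N_def using nz by (simp add: field_simps)
    ultimately show ?thesis by simp
  qed
  have N0: "N \<noteq> 0"
  proof
    assume "N = 0"
    hence "D = 0" using Nq q16 by (simp add: power_0_left)
    thus False using D0 by simp
  qed
  have "(N/D)^(q+1) = (N/D) * (N^q/D^q)" by (simp add: power_divide)
  also have "\<dots> = (N/D) * ((D/(a*b*c)) / (N/(a*b*c)))"
  proof -
    have "a*b*c \<noteq> 0" using nz by simp
    hence "N^q = D/(a*b*c)" "D^q = N/(a*b*c)" using Nq Dq by (simp_all add: eq_divide_eq)
    thus ?thesis by simp
  qed
  also have "\<dots> = 1" using N0 D0 nz by (simp add: field_simps)
  finally have MU: "N/D \<in> UU" by (simp add: roots_unity_def)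
  have Ma: "N/D \<noteq> a"
  proof
    assume "N/D = a"
    hence "N - a*D = 0" using D0 by (simp add: divide_eq_eq)
    moreover have "N - a*D = t*(a+b)*(c-a)" unfolding N_def D_def by (simp add: algebra_simps del: neg_self)
    ultimately show False using t0 ab by simp
  qed
  have Mb: "N/D \<noteq> b"
  proof
    assume "N/D = b"
    hence "N = b*D" using D0 by (simp add: divide_eq_eq)
    hence "N + b*D = 0" by simp
    moreover have "N + b*D = (t+1)*(a+b)*(b+c)" unfolding N_def D_def by (simp add: algebra_simps del: neg_self)
    ultimately show False using t0 ab by simp
  qed
  have Mc: "N/D \<noteq> c"
  proof
    assume "N/D = c"
    hence "N - c*D = 0" using D0 by (simp add: divide_eq_eq)
    moreover have "N - c*D = (a-c)*(b+c)" unfolding N_def D_def by (simp add: algebra_simps del: neg_self)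
    ultimately show False using ab by simp
  qed
  show ?thesis using D0 MU Ma Mb Mc unfolding D_def N_def by blast
qed

lemma M_distinct:
  fixes a b c t1 t2 :: 'a
  assumes dist: "a \<noteq> b" "a \<noteq> c" "b \<noteq> c" and t: "t1 \<noteq> t2"
    and D: "t1*(a+b) + (b+c) \<noteq> 0" "t2*(a+b) + (b+c) \<noteq> 0"
  shows "(t1*c*(a+b) + a*(b+c)) / (t1*(a+b) + (b+c)) \<noteq> (t2*c*(a+b) + a*(b+c)) / (t2*(a+b) + (b+c))"
proof
  assume "(t1*c*(a+b) + a*(b+c)) / (t1*(a+b) + (b+c)) = (t2*c*(a+b) + a*(b+c)) / (t2*(a+b) + (b+c))"
  hence "(t1*c*(a+b) + a*(b+c)) * (t2*(a+b) + (b+c)) - (t2*c*(a+b) + a*(b+c)) * (t1*(a+b) + (b+c)) = 0"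
    using D by (simp add: frac_eq_eq)
  moreover have "(t1*c*(a+b) + a*(b+c)) * (t2*(a+b) + (b+c)) - (t2*c*(a+b) + a*(b+c)) * (t1*(a+b) + (b+c))
     = (t1 - t2)*(a+b)*(b+c)*(c-a)" by (simp add: algebra_simps del: neg_self)
  moreover have "a + b \<noteq> 0" "b + c \<noteq> 0" "c - a \<noteq> 0" "t1 - t2 \<noteq> 0" using dist t add0D by auto
  ultimately show False by simp
qed

lemma e_ident:
  fixes a b c t1 t2 :: 'a
  assumes P: "t1*t2 = 1" and S: "t1+t2 = 1"
    and D: "t1*(a+b) + (b+c) \<noteq> 0" "t2*(a+b) + (b+c) \<noteq> 0"
  defines "d \<equiv> (t1*(c*(a+b)) + a*(b+c)) / (t1*(a+b) + (b+c))"
    and "e \<equiv> (t2*(c*(a+b)) + a*(b+c)) / (t2*(a+b) + (b+c))"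
  shows "e2f a b c d e = 0 \<and> e3f a b c d e = 0"
proof -
  define s where "s = a+b+c"
  define E2 where "E2 = a*b+b*c+c*a"
  define E3 where "E3 = a*b*c"
  define A where "A = a+b"
  define B where "B = b+c"
  define C where "C = c*(a+b)"
  define G where "G = a*(b+c)"
  have r2: "e2f a b c x y = E2 + s*(x+y) + x*y" for x y
    unfolding e2f_def E2_def s_def by (simp add: algebra_simps)
  have r3: "e3f a b c x y = E3 + E2*(x+y) + s*(x*y)" for x y
    unfolding e3f_def E3_def E2_def s_def by (simp add: algebra_simps)
  have D1: "t1*A+B \<noteq> 0" and D2: "t2*A+B \<noteq> 0" using D unfolding A_def B_def by auto
  have dD: "d*(t1*A+B) = t1*C+G" unfolding d_def A_def B_def C_def G_def using D by simp
  have eD: "e*(t2*A+B) = t2*C+G" unfolding e_def A_def B_def C_def G_def using D by simp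
  have "e2f a b c d e * ((t1*A+B)*(t2*A+B))
     = E2*((t1*A+B)*(t2*A+B)) + s*((d*(t1*A+B))*(t2*A+B) + (e*(t2*A+B))*(t1*A+B)) + (d*(t1*A+B))*(e*(t2*A+B))"
    unfolding r2 by (simp add: algebra_simps del: neg_self)
  also have "\<dots> = E2*((t1*A+B)*(t2*A+B)) + s*((t1*C+G)*(t2*A+B) + (t2*C+G)*(t1*A+B)) + (t1*C+G)*(t2*C+G)"
    by (simp only: dD eD)
  also have "\<dots> = E2*((t1*t2)*A^2 + (t1+t2)*A*B + B^2) + s*(2*(t1*t2)*A*C + (t1+t2)*(A*G+B*C) + 2*B*G)
       + (t1*t2)*C^2 + (t1+t2)*C*G + G^2" by (rule D_N_ident(1))
  also have "\<dots> = E2*(A^2 + A*B + B^2) + s*(A*G+B*C) + C^2 + C*G + G^2"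
    by (simp only: P S) (simp add: n0)
  also have "\<dots> = 0" unfolding E2_def s_def A_def B_def C_def G_def using char2_id2[of a b c] by (simp add: algebra_simps)
  finally have "e2f a b c d e * ((t1*A+B)*(t2*A+B)) = 0" .
  hence e2: "e2f a b c d e = 0" using D1 D2 by simp
  have "e3f a b c d e * ((t1*A+B)*(t2*A+B))
     = E3*((t1*A+B)*(t2*A+B)) + E2*((d*(t1*A+B))*(t2*A+B) + (e*(t2*A+B))*(t1*A+B)) + s*((d*(t1*A+B))*(e*(t2*A+B)))"
    unfolding r3 by (simp add: algebra_simps del: neg_self)
  also have "\<dots> = E3*((t1*A+B)*(t2*A+B)) + E2*((t1*C+G)*(t2*A+B) + (t2*C+G)*(t1*A+B)) + s*((t1*C+G)*(t2*C+G))"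
    by (simp only: dD eD)
  also have "\<dots> = E3*((t1*t2)*A^2 + (t1+t2)*A*B + B^2) + E2*(2*(t1*t2)*A*C + (t1+t2)*(A*G+B*C) + 2*B*G)
       + s*((t1*t2)*C^2 + (t1+t2)*C*G + G^2)" by (rule D_N_ident(2))
  also have "\<dots> = E3*(A^2 + A*B + B^2) + E2*(A*G+B*C) + s*(C^2 + C*G + G^2)"
    by (simp only: P S) (simp add: n0)
  also have "\<dots> = 0" unfolding E3_def E2_def s_def A_def B_def C_def G_def using char2_id3[of a b c] by (simp add: algebra_simps)
  finally have "e3f a b c d e * ((t1*A+B)*(t2*A+B)) = 0" .
  hence e3: "e3f a b c d e = 0" using D1 D2 by simp
  show ?thesis using e2 e3 by simp
qed

lemma L5:
  fixes v1 v2 v3 v4 v5 :: 'a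
  assumes U: "v1 \<in> UU" "v2 \<in> UU" "v3 \<in> UU" "v4 \<in> UU" "v5 \<in> UU"
    and h: "e2f v1 v2 v3 v4 v5 = 0" "e3f v1 v2 v3 v4 v5 = 0"
  shows "\<exists>x y. Zs q x y = {v1,v2,v3,v4,v5}"
proof -
  define e1 where "e1 = v1+v2+v3+v4+v5"
  define e4 where "e4 = v1*v2*v3*v4+v1*v2*v3*v5+v1*v2*v4*v5+v1*v3*v4*v5+v2*v3*v4*v5"
  define e5 where "e5 = v1*v2*v3*v4*v5"
  have nz: "v1 \<noteq> 0" "v2 \<noteq> 0" "v3 \<noteq> 0" "v4 \<noteq> 0" "v5 \<noteq> 0" using U U_nz by auto
  have Uq: "v1^q = inverse v1" "v2^q = inverse v2" "v3^q = inverse v3" "v4^q = inverse v4" "v5^q = inverse v5"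
    using U U_q by auto
  have "e5 \<in> UU" unfolding e5_def using U U_mult by simp
  then obtain y where y: "y \<noteq> 0" "y^(q-1) = e5" using U_surj by blast
  have qs: "q = Suc (q-1)" using q16 by simp
  have "y * y^(q-1) = y^q" by (metis power_Suc qs)
  hence yq: "y^q = y*e5" using y(2) by simp
  have e1q: "e1^q = inverse v1 + inverse v2 + inverse v3 + inverse v4 + inverse v5"
    unfolding e1_def by (simp add: fq_add Uq)
  have e54: "e5 * (inverse v1 + inverse v2 + inverse v3 + inverse v4 + inverse v5) = e4"
    unfolding e5_def e4_def using nz by (simp add: field_simps)
  define x where "x = y*e1"
  have "x^q = y^q * e1^q" unfolding x_def by (rule power_mult_distrib)
  also have "\<dots> = y * (e5 * (inverse v1 + inverse v2 + inverse v3 + inverse v4 + inverse v5))"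
    using yq e1q by (simp only: mult.assoc)
  also have "\<dots> = y*e4" using e54 by simp
  finally have xq: "x^q = y*e4" .
  have Hp: "Hf q x y u = y*((u+v1)*(u+v2)*(u+v3)*(u+v4)*(u+v5))" for u
  proof -
    have "Hf q x y u = y*u^5 + (y*e1)*u^4 + (y*e4)*u + y*e5" unfolding Hf_def xq yq by (simp add: x_def)
    also have "\<dots> = y*((u+v1)*(u+v2)*(u+v3)*(u+v4)*(u+v5))"
      unfolding prod5_expand h e1_def e4_def e5_def by (simp add: algebra_simps)
    finally show ?thesis .
  qed
  have "Zs q x y = {v1,v2,v3,v4,v5}"
  proof
    show "Zs q x y \<subseteq> {v1,v2,v3,v4,v5}"
    proof
      fix u assume "u \<in> Zs q x y"
      hence "Hf q x y u = 0" by (simp add: Zs_def)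
      hence "u + v1 = 0 \<or> u + v2 = 0 \<or> u + v3 = 0 \<or> u + v4 = 0 \<or> u + v5 = 0" using Hp y by simp
      thus "u \<in> {v1,v2,v3,v4,v5}" using add0D by blast
    qed
    show "{v1,v2,v3,v4,v5} \<subseteq> Zs q x y" using U Hp by (auto simp: Zs_def)
  qed
  thus ?thesis by blast
qed

end

definition Fam :: "nat \<Rightarrow> 'a::field set set" where
  "Fam q = {Zs q x y | x y. card (Zs q x y) = 5}"

context c2f begin

lemma Zs_sub: "Zs q x y \<subseteq> UU" by (auto simp: Zs_def)

lemma steiner:
  assumes T: "T \<subseteq> UU" "card T = 3"
  shows "card {B \<in> (Fam q :: 'a set set). T \<subseteq> B} = 1"
proof -
  obtain a b c where abc: "T = {a,b,c}" "a \<noteq> b" "b \<noteq> c" "a \<noteq> c" using T(2) card_3_iff by metis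
  have U: "a \<in> UU" "b \<in> UU" "c \<in> UU" using T abc by auto
  obtain w :: 'a where w: "w^2 + w + 1 = 0" "w^q = w" using omega_ex by blast
  have ww: "w^2 + w = 1" using w(1) add0D by (simp add: add.assoc)
  define t1 where "t1 = w"
  define t2 where "t2 = w + 1"
  have t1q: "t1^q = t1" using w unfolding t1_def by simp
  have t2q: "t2^q = t2" using w unfolding t2_def by (simp add: fq_add)
  have t1t: "t1^2 + t1 \<noteq> 0" using ww unfolding t1_def by simp
  have "t2^2 + t2 = w^2 + w"
    unfolding t2_def by (simp add: sq_add algebra_simps n0)
  hence t2t: "t2^2 + t2 \<noteq> 0" using ww by simp
  have P: "t1*t2 = 1" unfolding t1_def t2_def using ww by (simp add: algebra_simps power2_eq_square)
  have S: "t1+t2 = 1" unfolding t1_def t2_def by (simp add: add.assoc[symmetric])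
  have tne: "t1 \<noteq> t2" unfolding t1_def t2_def by simp
  have dist: "a \<noteq> b" "a \<noteq> c" "b \<noteq> c" using abc by auto
  define d where "d = (t1*c*(a+b) + a*(b+c)) / (t1*(a+b) + (b+c))"
  define e where "e = (t2*c*(a+b) + a*(b+c)) / (t2*(a+b) + (b+c))"
  note M1 = Mt[OF U dist t1q t1t, folded d_def]
  note M2 = Mt[OF U dist t2q t2t, folded e_def]
  have de: "d \<noteq> e" unfolding d_def e_def using M_distinct[OF dist tne] M1 M2 by blast
  have d': "d = (t1*(c*(a+b)) + a*(b+c)) / (t1*(a+b) + (b+c))" unfolding d_def by (simp add: mult.assoc)
  have e': "e = (t2*(c*(a+b)) + a*(b+c)) / (t2*(a+b) + (b+c))" unfolding e_def by (simp add: mult.assoc)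
  have ee: "e2f a b c d e = 0 \<and> e3f a b c d e = 0"
    unfolding d' e' using e_ident[OF P S] M1 M2 by blast
  obtain x y where Z: "Zs q x y = {a,b,c,d,e}"
    using L5[of a b c d e] U M1 M2 ee by blast
  define Z where "Z = {a,b,c,d,e}"
  have dist5: "distinct [a,b,c,d,e]" using dist M1 M2 de by auto
  have cZ: "card Z = 5" unfolding Z_def using dist5 by simp
  have ZF: "Z \<in> Fam q" unfolding Fam_def using Z cZ unfolding Z_def by (metis (mono_tags, lifting) mem_Collect_eq)
  have TZ: "T \<subseteq> Z" unfolding Z_def abc by auto
  have uniq: "B = Z" if B: "B \<in> Fam q" "T \<subseteq> B" for B
  proof -
    obtain x' y' where B': "B = Zs q x' y'" "card (Zs q x' y') = 5" using B(1) unfolding Fam_def by blast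
    have finB: "finite B" using B' by (metis card.infinite zero_neq_numeral)
    have "card (B - T) = 2" using card_Diff_subset[of T B] B(2) B'(2) T(2) B'(1) finite_subset[OF B(2) finB] by simp
    then obtain d1 e1 where de1: "B - T = {d1,e1}" "d1 \<noteq> e1" using card_2_iff by metis
    have BB: "B = {a,b,c,d1,e1}" using de1(1) B(2) abc by auto
    have d5: "distinct [a,b,c,d1,e1]" using de1 abc by auto
    have "e2f a b c d1 e1 = 0 \<and> e3f a b c d1 e1 = 0"
      by (rule L1[of a b c d1 e1 x' y']) (use d5 BB B' in auto)
    hence "{d1,e1} \<subseteq> {d,e}" using L3[OF U dist de1(2)] ee by blast
    hence "B \<subseteq> Z" unfolding Z_def BB by auto
    moreover have "finite Z" unfolding Z_def by simp
    ultimately show "B = Z" using card_subset_eq cZ B' by metis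
  qed
  have "{B \<in> Fam q. T \<subseteq> B} = {Z}"
  proof
    show "{B \<in> Fam q. T \<subseteq> B} \<subseteq> {Z}" using uniq by blast
    show "{Z} \<subseteq> {B \<in> Fam q. T \<subseteq> B}" using ZF TZ by blast
  qed
  thus ?thesis by simp
qed

end

context c2f begin

lemma code_zero:
  fixes a3 b a5 c u :: 'a
  assumes u: "u \<in> UU"
  shows "u^5 * trace_q2q q (a3*u^3 + b*u^(q-2) + a5*u^5 + c*u^(q-4))
    = (a3 + b^q)*u^8 + (a3 + b^q)^q*u^2 + (a5 + c^q)*u^10 + (a5 + c^q)^q"
proof -
  have nz: "u \<noteq> 0" using u U_nz by blast
  have uq: "u^q = inverse u" using u U_q by blast
  have e1: "u^(q+1) = 1" using u by (simp add: roots_unity_def)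
  have p2: "u^(q-2) = inverse u ^ 3"
  proof -
    have "u^(q-2) * u^3 = u^(q+1)" using q16 by (simp add: power_add[symmetric])
    hence "u^(q-2) * u^3 = 1" using e1 by simp
    thus ?thesis using nz by (simp add: power_inverse field_simps)
  qed
  have p4: "u^(q-4) = inverse u ^ 5"
  proof -
    have "u^(q-4) * u^5 = u^(q+1)" using q16 by (simp add: power_add[symmetric])
    hence "u^(q-4) * u^5 = 1" using e1 by simp
    thus ?thesis using nz by (simp add: power_inverse field_simps)
  qed
  have fu: "\<And>k. (u^k)^q = inverse u ^ k" using uq by (metis power_mult mult.commute)
  have fi: "\<And>k. (inverse u ^ k)^q = u ^ k"
    using uq by (metis power_mult mult.commute power_inverse inverse_inverse_eq)
  have "(a3*u^3 + b*u^(q-2) + a5*u^5 + c*u^(q-4))^q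
      = a3^q * inverse u^3 + b^q * u^3 + a5^q * inverse u^5 + c^q * u^5"
    unfolding p2 p4 by (simp add: fq_add power_mult_distrib fu fi)
  hence tr: "trace_q2q q (a3*u^3 + b*u^(q-2) + a5*u^5 + c*u^(q-4))
      = a3*u^3 + b*inverse u^3 + a5*u^5 + c*inverse u^5 + (a3^q * inverse u^3 + b^q * u^3 + a5^q * inverse u^5 + c^q * u^5)"
    unfolding trace_q2q_def p2 p4 by simp
  have X: "(a3 + b^q)^q = a3^q + b" by (simp add: fq_add fq_fq)
  have Y: "(a5 + c^q)^q = a5^q + c" by (simp add: fq_add fq_fq)
  show ?thesis unfolding tr X Y using nz by (simp add: field_simps eval_nat_numeral)
qed

lemma sq_H:
  fixes x y X Y u :: 'a
  assumes "x^2 = X" "y^2 = Y"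
  shows "X*u^8 + X^q*u^2 + Y*u^10 + Y^q = (Hf q x y u)^2"
proof -
  have c: "(z^q)^2 = (z^2)^q" for z :: 'a by (metis power_mult mult.commute)
  have "(Hf q x y u)^2 = (y*u^5)^2 + (x*u^4)^2 + (x^q*u)^2 + (y^q)^2"
    unfolding Hf_def by (simp add: sq_add)
  also have "\<dots> = Y*u^10 + X*u^8 + X^q*u^2 + Y^q"
  proof -
    have "(u^5)^2 = u^10" "(u^4)^2 = u^8" by (simp_all add: power_mult[symmetric])
    thus ?thesis using assms by (simp add: power_mult_distrib c)
  qed
  finally show ?thesis by (simp add: algebra_simps)
qed

lemma code_to_H:
  assumes "g \<in> trace_code q (code_C35 q :: ('a \<Rightarrow> 'a) set)"
  shows "\<exists>x y. \<forall>u\<in>UU. (g u = 0 \<longleftrightarrow> Hf q x y u = 0)"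
proof -
  obtain a3 b a5 c where g: "g = (\<lambda>u. trace_q2q q (a3*u^3 + b*u^(q-2) + a5*u^5 + c*u^(q-4)))"
    using assms unfolding trace_code_def code_C35_def by blast
  define X where "X = a3 + b^q"
  define Y where "Y = a5 + c^q"
  have ev: "even (q*q)" using qn q16 by (cases n) auto
  have sqrt: "(z^(q*q div 2))^2 = z" for z :: 'a
    using frob2[of z] ev by (metis power_mult dvd_mult_div_cancel mult.commute)
  define x where "x = X^(q*q div 2)"
  define y where "y = Y^(q*q div 2)"
  have "\<forall>u\<in>UU. (g u = 0 \<longleftrightarrow> Hf q x y u = 0)"
  proof
    fix u assume u: "u \<in> UU"
    have nz: "u \<noteq> 0" using u U_nz by blast
    have "u^5 * g u = (Hf q x y u)^2"
      unfolding g using code_zero[OF u, of a3 b a5 c] sq_H[of x X y Y u] sqrt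
      unfolding x_def y_def X_def Y_def by simp
    thus "g u = 0 \<longleftrightarrow> Hf q x y u = 0" using nz
      by (metis mult_eq_0_iff power_not_zero zero_power2 power_zero_numeral)
  qed
  thus ?thesis by blast
qed

lemma H_to_code:
  fixes x y :: 'a
  shows "\<exists>g \<in> trace_code q (code_C35 q :: ('a \<Rightarrow> 'a) set). \<forall>u\<in>UU. (g u = 0 \<longleftrightarrow> Hf q x y u = 0)"
proof -
  define g where "g = (\<lambda>u::'a. trace_q2q q (x^2*u^3 + 0*u^(q-2) + y^2*u^5 + 0*u^(q-4)))"
  define f where "f = (\<lambda>u::'a. x^2*u^3 + 0*u^(q-2) + y^2*u^5 + 0*u^(q-4))"
  have fin: "f \<in> code_C35 q"
    unfolding code_C35_def f_def by (intro CollectI exI[of _ "x^2"] exI[of _ 0] exI[of _ "y^2"] conjI refl TrueI)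
  have gin: "g \<in> trace_code q (code_C35 q)"
    unfolding trace_code_def by (intro CollectI exI[of _ f] conjI fin) (simp add: g_def f_def)
  have q0: "(0::'a)^q = 0" using q16 by (simp add: power_0_left)
  have "\<forall>u\<in>UU. (g u = 0 \<longleftrightarrow> Hf q x y u = 0)"
  proof
    fix u assume u: "u \<in> UU"
    have nz: "u \<noteq> 0" using u U_nz by blast
    have "u^5 * g u = (Hf q x y u)^2"
      unfolding g_def using code_zero[OF u, of "x^2" 0 "y^2" 0] sq_H[of x "x^2" y "y^2" u] q0 by simp
    thus "g u = 0 \<longleftrightarrow> Hf q x y u = 0" using nz
      by (metis mult_eq_0_iff power_not_zero zero_power2 power_zero_numeral)
  qed
  thus ?thesis using gin by blast
qed

end

lemma card_filter_sum:
  assumes "finite A"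
  shows "card {x\<in>A. P x} = (\<Sum>x\<in>A. if P x then 1 else 0)"
proof -
  have "card {x\<in>A. P x} = (\<Sum>x\<in>{x\<in>A. P x}. (1::nat))" by simp
  also have "\<dots> = (\<Sum>x\<in>A. if P x then 1 else 0)" using assms by (rule sum.inter_filter)
  finally show ?thesis .
qed

lemma avoid_split:
  fixes F :: "'b set set"
  assumes "finite F"
  shows "card {B\<in>F. J \<subseteq> B \<and> B \<inter> K = {}} = card {B\<in>F. J \<subseteq> B \<and> B \<inter> insert x K = {}}
          + card {B\<in>F. insert x J \<subseteq> B \<and> B \<inter> K = {}}"
proof -
  have "{B\<in>F. J \<subseteq> B \<and> B \<inter> K = {}} = {B\<in>F. J \<subseteq> B \<and> B \<inter> insert x K = {}}
          \<union> {B\<in>F. insert x J \<subseteq> B \<and> B \<inter> K = {}}" by auto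
  moreover have "{B\<in>F. J \<subseteq> B \<and> B \<inter> insert x K = {}} \<inter> {B\<in>F. insert x J \<subseteq> B \<and> B \<inter> K = {}} = {}"
    by auto
  ultimately show ?thesis using assms by (simp add: card_Un_disjoint)
qed

lemma dc:
  fixes P :: "'b set" and F :: "'b set set"
  assumes fin: "finite P" and FP: "\<forall>B\<in>F. B \<subseteq> P \<and> card B = k" and J: "J \<subseteq> P" "card J = j"
  shows "(\<Sum>x\<in>P-J. card {B\<in>F. insert x J \<subseteq> B}) = (k - j) * card {B\<in>F. J \<subseteq> B}"
proof -
  have finF: "finite F" using FP fin by (metis Pow_iff finite_Pow_iff finite_subset subsetI)
  have finJ: "finite J" using J fin finite_subset by blast
  have "(\<Sum>x\<in>P-J. card {B\<in>F. insert x J \<subseteq> B}) = (\<Sum>x\<in>P-J. \<Sum>B\<in>F. if insert x J \<subseteq> B then 1 else 0)"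
    using finF by (simp add: card_filter_sum)
  also have "\<dots> = (\<Sum>B\<in>F. \<Sum>x\<in>P-J. if insert x J \<subseteq> B then 1 else 0)" by (rule sum.swap)
  also have "\<dots> = (\<Sum>B\<in>F. if J \<subseteq> B then k - j else 0)"
  proof (rule sum.cong[OF refl])
    fix B assume B: "B \<in> F"
    have "(\<Sum>x\<in>P-J. if insert x J \<subseteq> B then 1 else 0) = card {x\<in>P-J. insert x J \<subseteq> B}"
      by (rule card_filter_sum[symmetric]) (use fin in simp)
    also have "{x\<in>P-J. insert x J \<subseteq> B} = (if J \<subseteq> B then B - J else {})" using FP B by auto
    also have "card \<dots> = (if J \<subseteq> B then k - j else 0)"
      using FP B J finJ by (auto simp: card_Diff_subset)
    finally show "(\<Sum>x\<in>P-J. if insert x J \<subseteq> B then 1 else 0) = (if J \<subseteq> B then k - j else 0)" .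
  qed
  also have "\<dots> = (k - j) * card {B\<in>F. J \<subseteq> B}"
    using finF by (simp add: card_filter_sum sum_distrib_left if_distrib cong: if_cong)
  finally show ?thesis .
qed

lemma steiner_counts:
  fixes P :: "'b set" and F :: "'b set set"
  assumes fin: "finite P" and cP: "card P = v" and FP: "\<forall>B\<in>F. B \<subseteq> P \<and> card B = 5"
    and St: "\<And>T. T \<subseteq> P \<Longrightarrow> card T = 3 \<Longrightarrow> card {B\<in>F. T \<subseteq> B} = 1"
    and T: "T \<subseteq> P" "card T = 3"
  shows "60 * int (card {B\<in>F. B \<inter> T = {}}) = (int v - 5)*(int v - 6)*(int v - 7)"
proof -
  have finF: "finite F" using FP fin by (metis Pow_iff finite_Pow_iff finite_subset subsetI)
  define cnt where "cnt J = card {B\<in>F. J \<subseteq> B}" for J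
  have v3: "v \<ge> 3" using T cP fin card_mono by metis
  have l2: "3 * cnt J = v - 2" if J: "J \<subseteq> P" "card J = 2" for J
  proof -
    have "(\<Sum>x\<in>P-J. cnt (insert x J)) = (\<Sum>x\<in>P-J. 1)"
    proof (rule sum.cong[OF refl])
      fix x assume x: "x \<in> P - J"
      have "finite J" using J fin finite_subset by blast
      hence "card (insert x J) = 3" using x J by simp
      moreover have "insert x J \<subseteq> P" using x J by auto
      ultimately show "cnt (insert x J) = 1" unfolding cnt_def using St by blast
    qed
    also have "\<dots> = v - 2" using J cP fin by (simp add: card_Diff_subset finite_subset)
    finally show ?thesis using dc[OF fin FP J] unfolding cnt_def by simp
  qed
  have l1: "12 * cnt J = (v - 1) * (v - 2)" if J: "J \<subseteq> P" "card J = 1" for J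
  proof -
    have "12 * cnt J = 3 * (4 * cnt J)" by simp
    also have "4 * cnt J = (\<Sum>x\<in>P-J. cnt (insert x J))" using dc[OF fin FP J] unfolding cnt_def by simp
    also have "3 * \<dots> = (\<Sum>x\<in>P-J. 3 * cnt (insert x J))" by (simp add: sum_distrib_left)
    also have "\<dots> = (\<Sum>x\<in>P-J. v - 2)"
    proof (rule sum.cong[OF refl])
      fix x assume x: "x \<in> P - J"
      have "finite J" using J fin finite_subset by blast
      hence "card (insert x J) = 2" using x J by simp
      thus "3 * cnt (insert x J) = v - 2" using l2 x J by simp
    qed
    also have "\<dots> = (v - 1) * (v - 2)" using J cP fin by (simp add: card_Diff_subset finite_subset)
    finally show ?thesis .
  qed
  have l0: "60 * cnt {} = v * (v - 1) * (v - 2)"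
  proof -
    have "60 * cnt {} = 12 * (5 * cnt {})" by simp
    also have "5 * cnt {} = (\<Sum>x\<in>P-{}. cnt (insert x {}))" using dc[OF fin FP, of "{}" 0] unfolding cnt_def by simp
    also have "12 * \<dots> = (\<Sum>x\<in>P. 12 * cnt {x})" by (simp add: sum_distrib_left)
    also have "\<dots> = (\<Sum>x\<in>P. (v - 1) * (v - 2))"
      by (rule sum.cong[OF refl]) (use l1 in simp)
    also have "\<dots> = v * (v - 1) * (v - 2)" using cP by simp
    finally show ?thesis .
  qed
  obtain t1 t2 t3 where t: "T = {t1,t2,t3}" "t1 \<noteq> t2" "t2 \<noteq> t3" "t1 \<noteq> t3" using T(2) card_3_iff by metis
  have tP: "t1 \<in> P" "t2 \<in> P" "t3 \<in> P" using T t by auto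
  define av where "av J K = int (card {B\<in>F. J \<subseteq> B \<and> B \<inter> K = {}})" for J K
  have sp: "av J K = av J (insert x K) + av (insert x J) K" for J K x
    unfolding av_def using avoid_split[OF finF, of J K x] by simp
  have a0: "av J {} = int (cnt J)" for J unfolding av_def cnt_def by simp
  have "av {} T = av {} {t1,t2} - av {t3} {t1,t2}"
    using sp[of "{}" "{t1,t2}" t3] t(1) by (simp add: insert_commute)
  moreover have "av {} {t1,t2} = av {} {t1} - av {t2} {t1}"
    using sp[of "{}" "{t1}" t2] by (simp add: insert_commute)
  moreover have "av {} {t1} = av {} {} - av {t1} {}" using sp[of "{}" "{}" t1] by simp
  moreover have "av {t2} {t1} = av {t2} {} - av {t1,t2} {}" using sp[of "{t2}" "{}" t1] by simp
  moreover have "av {t3} {t1,t2} = av {t3} {t1} - av {t2,t3} {t1}" using sp[of "{t3}" "{t1}" t2] by (simp add: insert_commute)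
  moreover have "av {t3} {t1} = av {t3} {} - av {t1,t3} {}" using sp[of "{t3}" "{}" t1] by simp
  moreover have "av {t2,t3} {t1} = av {t2,t3} {} - av {t1,t2,t3} {}" using sp[of "{t2,t3}" "{}" t1] by simp
  ultimately have N: "av {} T = int (cnt {}) - int (cnt {t1}) - int (cnt {t2}) - int (cnt {t3})
     + int (cnt {t1,t2}) + int (cnt {t1,t3}) + int (cnt {t2,t3}) - int (cnt {t1,t2,t3})"
    by (simp add: a0)
  have c3: "cnt {t1,t2,t3} = 1" unfolding cnt_def using St[OF T] t(1) by simp
  have c2: "3 * int (cnt {t1,t2}) = int v - 2" "3 * int (cnt {t1,t3}) = int v - 2" "3 * int (cnt {t2,t3}) = int v - 2"
    using l2[of "{t1,t2}"] l2[of "{t1,t3}"] l2[of "{t2,t3}"] tP t v3 by (simp_all add: of_nat_diff)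
  have e: "int ((v - 1) * (v - 2)) = (int v - 1)*(int v - 2)" using v3 by (simp add: of_nat_diff)
  have h1: "12 * cnt {x} = (v-1)*(v-2)" if "x \<in> P" for x using l1[of "{x}"] that by simp
  have c1x: "12 * int (cnt {x}) = (int v - 1)*(int v - 2)" if "x \<in> P" for x
  proof -
    have "int (12 * cnt {x}) = int ((v-1)*(v-2))" using h1[OF that] by simp
    thus ?thesis using e by simp
  qed
  have c1: "12 * int (cnt {t1}) = (int v - 1)*(int v - 2)" "12 * int (cnt {t2}) = (int v - 1)*(int v - 2)"
      "12 * int (cnt {t3}) = (int v - 1)*(int v - 2)" using c1x tP by auto
  have c0: "60 * int (cnt {}) = int v * (int v - 1) * (int v - 2)"
  proof -
    have "int (v * (v - 1) * (v - 2)) = int v * (int v - 1) * (int v - 2)" using v3 by (simp add: of_nat_diff)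
    moreover have "int (60 * cnt {}) = int (v * (v - 1) * (v - 2))" using l0 by simp
    ultimately show ?thesis by simp
  qed
  have "60 * av {} T = 60 * int (cnt {}) - 5 * (12 * int (cnt {t1})) - 5 * (12 * int (cnt {t2})) - 5 * (12 * int (cnt {t3}))
     + 20 * (3 * int (cnt {t1,t2})) + 20 * (3 * int (cnt {t1,t3})) + 20 * (3 * int (cnt {t2,t3})) - 60 * int (cnt {t1,t2,t3})"
    unfolding N by (simp add: algebra_simps)
  also have "\<dots> = (int v - 5)*(int v - 6)*(int v - 7)"
    unfolding c0 c1 c2 c3 by (simp add: algebra_simps)
  finally show ?thesis unfolding av_def by simp
qed

context c2f begin

lemma comp_eq:
  "complement_blocks UU (blocks_of_weight UU (trace_code q (code_C35 q :: ('a \<Rightarrow> 'a) set)) (q - 4)) = Fam q"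
proof
  show "complement_blocks UU (blocks_of_weight UU (trace_code q (code_C35 q)) (q - 4)) \<subseteq> Fam q"
  proof
    fix Z :: "'a set" assume "Z \<in> complement_blocks UU (blocks_of_weight UU (trace_code q (code_C35 q)) (q - 4))"
    then obtain g :: "'a \<Rightarrow> 'a" where g: "g \<in> trace_code q (code_C35 q)" "card (supp_on UU g) = q - 4"
      "Z = UU - supp_on UU g"
      unfolding complement_blocks_def blocks_of_weight_def by blast
    obtain x y :: 'a where xy: "\<forall>u\<in>UU. (g u = 0 \<longleftrightarrow> Hf q x y u = 0)" using code_to_H[OF g(1)] by blast
    have ZZ: "Z = Zs q x y" using xy g(3) by (auto simp: Zs_def supp_on_def)
    have "card Z = card UU - card (supp_on UU g)" unfolding g(3)
      by (rule card_Diff_subset) (auto simp: supp_on_def intro: finite_subset)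
    hence "card Z = 5" using g(2) card_U q16 by simp
    thus "Z \<in> Fam q" unfolding Fam_def using ZZ by blast
  qed
  show "Fam q \<subseteq> complement_blocks UU (blocks_of_weight UU (trace_code q (code_C35 q)) (q - 4))"
  proof
    fix Z :: "'a set" assume "Z \<in> Fam q"
    then obtain x y :: 'a where Z: "Z = Zs q x y" "card (Zs q x y) = 5" unfolding Fam_def by blast
    obtain g :: "'a \<Rightarrow> 'a" where g: "g \<in> trace_code q (code_C35 q)" "\<forall>u\<in>UU. (g u = 0 \<longleftrightarrow> Hf q x y u = 0)"
      using H_to_code by blast
    have S: "supp_on UU g = UU - Z" using g(2) Z(1) by (auto simp: Zs_def supp_on_def)
    have "card (UU - Z) = card UU - card Z"
      by (rule card_Diff_subset) (use Z Zs_sub in \<open>auto intro: finite_subset\<close>)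
    hence "card (supp_on UU g) = q - 4" using S Z card_U by simp
    hence "supp_on UU g \<in> blocks_of_weight UU (trace_code q (code_C35 q)) (q - 4)"
      unfolding blocks_of_weight_def using g(1) by blast
    moreover have "Z = UU - supp_on UU g" using S Z Zs_sub by auto
    ultimately show "Z \<in> complement_blocks UU (blocks_of_weight UU (trace_code q (code_C35 q)) (q - 4))"
      unfolding complement_blocks_def by blast
  qed
qed

end

lemma four_pow_mod3: "(4::nat)^k mod 3 = 1"
proof (induction k)
  case 0 then show ?case by simp
next
  case (Suc k)
  have "(4::nat)^Suc k mod 3 = ((4 mod 3) * (4^k mod 3)) mod 3" by (simp only: power_Suc mod_mult_eq)
  also have "\<dots> = 1" using Suc by simp
  finally show ?case .
qed

theorem theorem25:
  fixes m :: nat and q :: nat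
  assumes "even m" and "m \<ge> 4" and "q = 2 ^ m"
    and "card (UNIV :: ('a::{field,finite}) set) = q ^ 2"
  defines "U \<equiv> roots_unity q :: 'a set"
  defines "Bs \<equiv> blocks_of_weight U (trace_code q (code_C35 q)) (q - 4)"
  shows "is_t_design 3 (q + 1) (q - 4) ((q - 4) * (q - 5) * (q - 6) div 60) U Bs
         \<and> is_t_design 3 (q + 1) 5 1 U (complement_blocks U Bs)"
proof -
  have cq: "card (UNIV::'a set) = q*q" using assms(4) by (simp add: power2_eq_square)
  have two: "(2::'a) = 0"
  proof -
    have "(of_nat (card (UNIV::'a set)) :: 'a) = 0" by (rule fin_field_card_zero)
    hence "(of_nat (2^(m*2)) :: 'a) = 0" using assms(3,4) by (simp add: power_mult)
    hence "(2::'a)^(m*2) = 0" by simp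
    thus ?thesis by simp
  qed
  have q16: "16 \<le> q"
  proof -
    have "(2::nat)^4 \<le> 2^m" using assms(2) by (rule power_increasing) simp
    thus ?thesis using assms(3) by simp
  qed
  have q3: "q mod 3 = 1"
  proof -
    obtain k where "m = 2*k" using assms(1) by blast
    hence "q = 4^k" using assms(3) by (simp add: power_mult)
    thus ?thesis using four_pow_mod3 by simp
  qed
  have frob: "\<And>x::'a. x^(q*q) = x" using fin_field_pow_card cq by metis
  interpret c: c2f "TYPE('a)" q m
    by (unfold_locales) (use two assms(3) frob q3 q16 cq in auto)
  have CE: "complement_blocks U Bs = Fam q" unfolding U_def Bs_def by (rule c.comp_eq)
  have finU: "finite U" by simp
  have cU: "card U = q + 1" unfolding U_def by (rule c.card_U)
  have FamU: "\<forall>B\<in>Fam q. B \<subseteq> U \<and> card B = 5" unfolding Fam_def U_def using c.Zs_sub by blast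
  have St: "\<And>T. T \<subseteq> U \<Longrightarrow> card T = 3 \<Longrightarrow> card {B\<in>Fam q. T \<subseteq> B} = 1"
    unfolding U_def using c.steiner by blast
  have D2: "is_t_design 3 (q + 1) 5 1 U (complement_blocks U Bs)"
    unfolding is_t_design_def CE using finU cU FamU St by auto
  have BsU: "\<forall>B\<in>Bs. B \<subseteq> U \<and> card B = q - 4"
    unfolding Bs_def blocks_of_weight_def supp_on_def by auto
  have inj: "inj_on (\<lambda>B. U - B) Bs" by (rule inj_onI) (use BsU in blast)
  have lam: "card {B\<in>Bs. T \<subseteq> B} = (q - 4) * (q - 5) * (q - 6) div 60" if T: "T \<subseteq> U" "card T = 3" for T
  proof -
    have im: "(\<lambda>B. U - B) ` {B\<in>Bs. T \<subseteq> B} = {Z\<in>Fam q. Z \<inter> T = {}}"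
    proof -
      have "(\<lambda>B. U - B) ` {B\<in>Bs. T \<subseteq> B} = {Z\<in>(\<lambda>B. U - B) ` Bs. Z \<inter> T = {}}"
        using BsU T by blast
      thus ?thesis using CE unfolding complement_blocks_def by simp
    qed
    have "card {B\<in>Bs. T \<subseteq> B} = card {Z\<in>Fam q. Z \<inter> T = {}}"
      using card_image[OF inj_on_subset[OF inj, of "{B\<in>Bs. T \<subseteq> B}"]] im by auto
    moreover have "60 * int (card {Z\<in>Fam q. Z \<inter> T = {}}) = (int (q+1) - 5)*(int (q+1) - 6)*(int (q+1) - 7)"
      by (rule steiner_counts[OF finU cU FamU St T])
    moreover have "(int (q+1) - 5)*(int (q+1) - 6)*(int (q+1) - 7) = int ((q - 4) * (q - 5) * (q - 6))"
      using q16 by (simp add: of_nat_diff)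
    ultimately have "60 * card {B\<in>Bs. T \<subseteq> B} = (q - 4) * (q - 5) * (q - 6)" by linarith
    thus ?thesis by simp
  qed
  have pos: "(q - 4) * (q - 5) * (q - 6) div 60 > 0"
  proof -
    have "12*11*10 \<le> (q - 4) * (q - 5) * (q - 6)" using q16 by (intro mult_le_mono) auto
    thus ?thesis by simp
  qed
  have D1: "is_t_design 3 (q + 1) (q - 4) ((q - 4) * (q - 5) * (q - 6) div 60) U Bs"
    unfolding is_t_design_def using finU cU BsU lam pos by auto
  show ?thesis using D1 D2 by simp
qed

end
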